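(* Let $G$ be a very well-covered graph with $2n$ vertices, $K$ a field and $S=K[x_v : v\in V(G)]$. Then $\dim(S/NI(G))\geq n$. If moreover $G$ is well-dominated, then $\dim(S/NI(G))=n$.
   Context: $G$ is very well-covered if it has no isolated vertices and every maximal independent set has exactly $|V(G)|/2$ elements. $N_G[v]$ is the closed neighborhood of $v$ and $NI(G)=\big(\prod_{w\in N_G[v]} x_w : v\in V(G)\big)$ is the closed neighborhood ideal. A dominating set is a set of vertices meeting every closed neighborhood; $G$ is well-dominated if all its minimal (with respect to inclusion) dominating sets have the same cardinality. $K$ is an infinite field. *)

theory Defs
  imports "HOL-Library.Poly_Mapping" "HOL-Library.Extended_Nat"
begin

text \<open>Polynomials in variables indexed by 'v with coefficients in 'k:
  finitely supported maps from monomials (exponent vectors, finitely supported maps to nat) to 'k.\<close>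
type_synonym ('v, 'k) mpoly = "('v \<Rightarrow>\<^sub>0 nat) \<Rightarrow>\<^sub>0 'k"

definition var :: "'v \<Rightarrow> ('v, 'k::comm_ring_1) mpoly" where
  "var v = Poly_Mapping.single (Poly_Mapping.single v 1) 1"

definition is_ideal :: "'a::comm_ring_1 set \<Rightarrow> bool" where
  "is_ideal I \<longleftrightarrow> 0 \<in> I \<and> (\<forall>a\<in>I. \<forall>b\<in>I. a + b \<in> I) \<and> (\<forall>r. \<forall>a\<in>I. r * a \<in> I)"

definition is_prime_ideal :: "'a::comm_ring_1 set \<Rightarrow> bool" where
  "is_prime_ideal P \<longleftrightarrow> is_ideal P \<and> P \<noteq> UNIV \<and> (\<forall>a b. a * b \<in> P \<longrightarrow> a \<in> P \<or> b \<in> P)"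

definition ideal_gen :: "'a::comm_ring_1 set \<Rightarrow> 'a set" where
  "ideal_gen A = \<Inter>{J. is_ideal J \<and> A \<subseteq> J}"

text \<open>Krull dimension of the quotient ring R/I: supremum of lengths n of chains
  P_0 \<subset> P_1 \<subset> ... \<subset> P_n of prime ideals of R containing I
  (these correspond bijectively to chains of primes of R/I).\<close>
definition krull_dim_quot :: "'a::comm_ring_1 set \<Rightarrow> enat" where
  "krull_dim_quot I = Sup {enat n | n. \<exists>P :: nat \<Rightarrow> 'a set.
      (\<forall>i\<le>n. is_prime_ideal (P i) \<and> I \<subseteq> P i) \<and> (\<forall>i<n. P i \<subset> P (Suc i))}"

text \<open>A finite simple graph on the vertex type 'v (all of UNIV is the vertex set),
  given by a symmetric irreflexive adjacency relation E.\<close>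
definition simple_graph :: "('v \<Rightarrow> 'v \<Rightarrow> bool) \<Rightarrow> bool" where
  "simple_graph E \<longleftrightarrow> (\<forall>u v. E u v \<longrightarrow> E v u) \<and> (\<forall>v. \<not> E v v)"

definition closed_nbhd :: "('v \<Rightarrow> 'v \<Rightarrow> bool) \<Rightarrow> 'v \<Rightarrow> 'v set" where
  "closed_nbhd E v = insert v {u. E v u}"

definition independent :: "('v \<Rightarrow> 'v \<Rightarrow> bool) \<Rightarrow> 'v set \<Rightarrow> bool" where
  "independent E A \<longleftrightarrow> (\<forall>u\<in>A. \<forall>v\<in>A. \<not> E u v)"

definition maximal_independent :: "('v \<Rightarrow> 'v \<Rightarrow> bool) \<Rightarrow> 'v set \<Rightarrow> bool" where
  "maximal_independent E A \<longleftrightarrow> independent E A \<and> (\<forall>B. independent E B \<and> A \<subseteq> B \<longrightarrow> B = A)"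

definition very_well_covered :: "('v::finite \<Rightarrow> 'v \<Rightarrow> bool) \<Rightarrow> bool" where
  "very_well_covered (E :: 'v \<Rightarrow> 'v \<Rightarrow> bool) \<longleftrightarrow> (\<forall>v. \<exists>u. E v u) \<and>
     (\<forall>A. maximal_independent E A \<longrightarrow> 2 * card A = card (UNIV :: 'v set))"

definition dominating :: "('v \<Rightarrow> 'v \<Rightarrow> bool) \<Rightarrow> 'v set \<Rightarrow> bool" where
  "dominating E D \<longleftrightarrow> (\<forall>v. D \<inter> closed_nbhd E v \<noteq> {})"

definition minimal_dominating :: "('v \<Rightarrow> 'v \<Rightarrow> bool) \<Rightarrow> 'v set \<Rightarrow> bool" where
  "minimal_dominating E D \<longleftrightarrow> dominating E D \<and> (\<forall>D'. D' \<subset> D \<longrightarrow> \<not> dominating E D')"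

definition well_dominated :: "('v::finite \<Rightarrow> 'v \<Rightarrow> bool) \<Rightarrow> bool" where
  "well_dominated E \<longleftrightarrow> (\<forall>D D'. minimal_dominating E D \<and> minimal_dominating E D' \<longrightarrow> card D = card D')"

definition NI :: "('v \<Rightarrow> 'v \<Rightarrow> bool) \<Rightarrow> ('v, 'k::comm_ring_1) mpoly set" where
  "NI E = ideal_gen {(\<Prod>w\<in>closed_nbhd E v. var w) | v. True}"

end

theory Submission
  imports Defs "HOL-Computational_Algebra.Polynomial" "HOL-Library.Countable"
begin

lemma ideal_diff: "is_ideal I \<Longrightarrow> a \<in> I \<Longrightarrow> b \<in> I \<Longrightarrow> a - b \<in> I"
proof -
  assume I: "is_ideal I" "a \<in> I" "b \<in> I"
  have "(-1) * b \<in> I" using I unfolding is_ideal_def by blast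
  then have "a + (-1) * b \<in> I" using I unfolding is_ideal_def by blast
  then show ?thesis by simp
qed

lemma ideal_mult_left: "is_ideal I \<Longrightarrow> a \<in> I \<Longrightarrow> r * a \<in> I"
  unfolding is_ideal_def by blast

lemma ideal_mult_right: "is_ideal I \<Longrightarrow> a \<in> I \<Longrightarrow> a * r \<in> I"
  unfolding is_ideal_def by (metis mult.commute)

lemma ideal_add: "is_ideal I \<Longrightarrow> a \<in> I \<Longrightarrow> b \<in> I \<Longrightarrow> a + b \<in> I"
  unfolding is_ideal_def by blast

lemma ideal_zero: "is_ideal I \<Longrightarrow> 0 \<in> I"
  unfolding is_ideal_def by blast

lemma ideal_sum: "is_ideal I \<Longrightarrow> (\<And>x. x \<in> A \<Longrightarrow> f x \<in> I) \<Longrightarrow> sum f A \<in> I"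
proof (induction A rule: infinite_finite_induct)
  case (infinite A) then show ?case by (simp add: ideal_zero)
next
  case empty then show ?case by (simp add: ideal_zero)
next
  case (insert x F) then show ?case by (simp add: ideal_add)
qed

lemma prime_ideal: "is_prime_ideal P \<Longrightarrow> is_ideal P"
  unfolding is_prime_ideal_def by blast

lemma prime_one: "is_prime_ideal P \<Longrightarrow> 1 \<notin> P"
proof
  assume P: "is_prime_ideal P" "1 \<in> P"
  then have "\<forall>r. r * 1 \<in> P" unfolding is_prime_ideal_def is_ideal_def by blast
  then have "P = UNIV" by auto
  with P show False unfolding is_prime_ideal_def by blast
qed

lemma prime_mult: "is_prime_ideal P \<Longrightarrow> a * b \<in> P \<Longrightarrow> a \<in> P \<or> b \<in> P"
  unfolding is_prime_ideal_def by blast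

lemma prime_mult_notin: "is_prime_ideal P \<Longrightarrow> a \<notin> P \<Longrightarrow> b \<notin> P \<Longrightarrow> a * b \<notin> P"
  using prime_mult by blast

lemma prime_power_notin: "is_prime_ideal P \<Longrightarrow> a \<notin> P \<Longrightarrow> a ^ k \<notin> P"
  by (induction k) (auto simp: prime_one dest: prime_mult)

lemma prime_prod: assumes P: "is_prime_ideal P" shows "finite A \<Longrightarrow> prod f A \<in> P \<Longrightarrow> \<exists>x\<in>A. f x \<in> P"
proof (induction A rule: finite_induct)
  case empty then show ?case by (simp add: prime_one P)
next
  case (insert x F) then show ?case using prime_mult[OF P] by fastforce
qed

section \<open>Abstract fiber lemma\<close>

definition subring :: "'a::comm_ring_1 set \<Rightarrow> bool" where
  "subring B \<longleftrightarrow> 0 \<in> B \<and> 1 \<in> B \<and> (\<forall>a\<in>B. \<forall>b\<in>B. a + b \<in> B \<and> a - b \<in> B \<and> a * b \<in> B)"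

definition inB :: "'a::comm_ring_1 set \<Rightarrow> 'a poly \<Rightarrow> bool" where
  "inB B p \<longleftrightarrow> (\<forall>i. coeff p i \<in> B)"

definition good :: "'a::comm_ring_1 set \<Rightarrow> 'a poly \<Rightarrow> bool" where
  "good P p \<longleftrightarrow> (\<exists>i. coeff p i \<notin> P)"

lemma subring_sum: "subring B \<Longrightarrow> (\<And>x. x \<in> A \<Longrightarrow> f x \<in> B) \<Longrightarrow> sum f A \<in> B"
proof (induction A rule: infinite_finite_induct)
  case (infinite A) then show ?case by (simp add: subring_def)
next
  case empty then show ?case by (simp add: subring_def)
next
  case (insert x F) then show ?case by (simp add: subring_def)
qed

lemma inB_mult: "subring B \<Longrightarrow> inB B p \<Longrightarrow> inB B q \<Longrightarrow> inB B (p * q)"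
  unfolding inB_def coeff_mult by (intro allI subring_sum) (auto simp: subring_def)

lemma inB_diff: "subring B \<Longrightarrow> inB B p \<Longrightarrow> inB B q \<Longrightarrow> inB B (p - q)"
  unfolding inB_def subring_def by simp

lemma inB_add: "subring B \<Longrightarrow> inB B p \<Longrightarrow> inB B q \<Longrightarrow> inB B (p + q)"
  unfolding inB_def subring_def by simp

lemma inB_smult: "subring B \<Longrightarrow> a \<in> B \<Longrightarrow> inB B p \<Longrightarrow> inB B (smult a p)"
  unfolding inB_def subring_def by simp

lemma inB_monom: "subring B \<Longrightarrow> a \<in> B \<Longrightarrow> inB B (monom a n)"
  unfolding inB_def subring_def by (simp add: coeff_monom)

lemma inB_zero: "subring B \<Longrightarrow> inB B 0"
  unfolding inB_def subring_def by simp

lemma subring_power: "subring B \<Longrightarrow> a \<in> B \<Longrightarrow> a ^ k \<in> B"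
  by (induction k) (auto simp: subring_def)

lemma pseudo_div_exists:
  assumes B: "subring B" and h: "inB B h" "h \<noteq> 0"
  shows "inB B f \<Longrightarrow> \<exists>k q r. smult (lead_coeff h ^ k) f = q * h + r \<and> inB B q \<and> inB B r
           \<and> (r = 0 \<or> degree r < degree h)"
proof (induction "if f = 0 then 0 else Suc (degree f)" arbitrary: f rule: less_induct)
  case less
  show ?case
  proof (cases "f = 0 \<or> degree f < degree h")
    case True
    then show ?thesis
      by (intro exI[of _ 0] exI[of _ 0] exI[of _ f]) (auto simp: less.prems inB_zero[OF B])
  next
    case False
    then have f0: "f \<noteq> 0" and dge: "degree h \<le> degree f" by auto
    define n where "n = degree f - degree h"
    define f' where "f' = smult (lead_coeff h) f - monom (lead_coeff f) n * h"
    have lcB: "lead_coeff h \<in> B" "lead_coeff f \<in> B" using h less.prems unfolding inB_def by auto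
    have f'B: "inB B f'" unfolding f'_def
      by (intro inB_diff inB_mult inB_smult inB_monom B lcB less.prems h)
    have d1: "degree (monom (lead_coeff f) n * h) \<le> degree f"
      using degree_mult_le[of "monom (lead_coeff f) n" h] degree_monom_le[of "lead_coeff f" n]
      by (simp add: n_def) (use dge in linarith)
    have d2: "degree f' \<le> degree f" unfolding f'_def
      by (intro degree_diff_le d1 order.trans[OF degree_smult_le]) simp
    have c: "coeff f' (degree f) = 0"
      unfolding f'_def using dge by (simp add: coeff_monom_mult n_def)
    have meas: "(if f' = 0 then 0 else Suc (degree f')) < (if f = 0 then 0 else Suc (degree f))"
    proof (cases "f' = 0")
      case False
      then have "degree f' \<noteq> degree f" using c by (metis leading_coeff_0_iff)
      with d2 f0 show ?thesis by auto
    qed (use f0 in auto)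
    from less.hyps[OF meas f'B] obtain k q r where
      kqr: "smult (lead_coeff h ^ k) f' = q * h + r" "inB B q" "inB B r" "r = 0 \<or> degree r < degree h"
      by blast
    have "smult (lead_coeff h ^ Suc k) f = smult (lead_coeff h ^ k) f' + smult (lead_coeff h ^ k) (monom (lead_coeff f) n * h)"
      unfolding f'_def by (simp add: smult_diff_right mult.commute)
    also have "\<dots> = (q + smult (lead_coeff h ^ k) (monom (lead_coeff f) n)) * h + r"
      unfolding kqr(1) by (simp add: algebra_simps)
    finally show ?thesis
      using kqr(2-4) by (intro exI[of _ "Suc k"] exI[of _ "q + smult (lead_coeff h ^ k) (monom (lead_coeff f) n)"] exI[of _ r])
        (auto intro!: inB_add inB_smult inB_monom B lcB subring_power)
  qed
qed

lemma ng_ev: "is_ideal P \<Longrightarrow> (\<And>i. coeff p i \<in> P) \<Longrightarrow> poly p z \<in> P"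
  unfolding poly_altdef by (intro ideal_sum) (auto intro: ideal_mult_right)

lemma not_good_mult: "is_ideal P \<Longrightarrow> \<not> good P q \<Longrightarrow> \<not> good P (q * h)"
  unfolding good_def coeff_mult by (auto intro!: ideal_sum ideal_mult_right)

definition tr :: "'a::comm_ring_1 set \<Rightarrow> 'a poly \<Rightarrow> 'a poly" where
  "tr P p = map_poly (\<lambda>c. if c \<in> P then 0 else c) p"

lemma coeff_tr: "0 \<in> P \<Longrightarrow> coeff (tr P p) i = (if coeff p i \<in> P then 0 else coeff p i)"
  unfolding tr_def by (subst coeff_map_poly) auto

lemma degree_tr: "0 \<in> P \<Longrightarrow> degree (tr P p) \<le> degree p"
  by (rule degree_le) (auto simp: coeff_tr coeff_eq_0)

lemma inB_tr: "0 \<in> P \<Longrightarrow> 0 \<in> B \<Longrightarrow> inB B p \<Longrightarrow> inB B (tr P p)"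
  unfolding inB_def by (auto simp: coeff_tr)

lemma good_tr: "0 \<in> P \<Longrightarrow> good P p \<Longrightarrow> tr P p \<noteq> 0"
  unfolding good_def by (metis coeff_0 coeff_tr)

lemma lc_tr: "0 \<in> P \<Longrightarrow> tr P p \<noteq> 0 \<Longrightarrow> lead_coeff (tr P p) \<notin> P"
  by (metis coeff_tr leading_coeff_0_iff)

lemma ev_tr: "is_ideal P \<Longrightarrow> poly p z - poly (tr P p) z \<in> P"
proof -
  assume I: "is_ideal P"
  have "poly (p - tr P p) z \<in> P"
    by (rule ng_ev[OF I]) (auto simp: coeff_tr ideal_zero[OF I])
  then show ?thesis by simp
qed

lemma ev_tr_in: "is_ideal P \<Longrightarrow> P \<subseteq> Q \<Longrightarrow> is_ideal Q \<Longrightarrow> poly p z \<in> Q \<Longrightarrow> poly (tr P p) z \<in> Q"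
proof -
  assume a: "is_ideal P" "P \<subseteq> Q" "is_ideal Q" "poly p z \<in> Q"
  have "poly p z - poly (tr P p) z \<in> Q" using ev_tr[OF a(1)] a(2) by blast
  from ideal_diff[OF a(3) a(4) this] show ?thesis by simp
qed

lemma fiber:
  fixes P Q B :: "'a::comm_ring_1 set" and z :: 'a
  assumes nzd: "\<And>a b::'a. a * b = 0 \<Longrightarrow> a = 0 \<or> b = 0"
    and P: "is_prime_ideal P" and Q: "is_prime_ideal Q" and PQ: "P \<subseteq> Q"
    and B: "subring B" and PB: "P \<inter> B = Q \<inter> B"
    and g: "inB B g" "poly g z \<in> P" "good P g"
    and f: "inB B f" "poly f z \<in> Q"
  shows "poly f z \<in> P"
proof -
  have IP: "is_ideal P" and IQ: "is_ideal Q" using P Q by (auto simp: prime_ideal)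
  have P0: "0 \<in> P" and B0: "0 \<in> B" using IP B by (auto simp: ideal_zero subring_def)
  define S where "S = {p. inB B p \<and> poly p z \<in> Q \<and> p \<noteq> 0 \<and> lead_coeff p \<notin> P}"
  define g' where "g' = tr P g"
  have g'P: "poly g' z \<in> P" unfolding g'_def using ev_tr_in[OF IP order.refl IP g(2)] .
  have g'0: "g' \<noteq> 0" unfolding g'_def using good_tr[OF P0 g(3)] .
  have g'S: "g' \<in> S" unfolding S_def
    using inB_tr[OF P0 B0 g(1)] g'P PQ g'0 lc_tr[OF P0 g'0[unfolded g'_def]] unfolding g'_def by auto
  define e where "e = (LEAST d. \<exists>p\<in>S. degree p = d)"
  obtain h where hS: "h \<in> S" and he: "degree h = e"
    using LeastI_ex[of "\<lambda>d. \<exists>p\<in>S. degree p = d"] g'S unfolding e_def by blast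
  have emin: "\<And>p. p \<in> S \<Longrightarrow> e \<le> degree p"
    unfolding e_def by (rule Least_le) blast
  define c where "c = lead_coeff h"
  have cB: "c \<in> B" and cP: "c \<notin> P" and h0: "h \<noteq> 0" and hB: "inB B h" and hQ: "poly h z \<in> Q"
    using hS unfolding S_def c_def inB_def by auto
  have ckP: "c ^ k \<notin> P" for k using prime_power_notin[OF P cP] .
  have Rfact: "poly r z \<in> P" if r: "inB B r" "poly r z \<in> Q" "r = 0 \<or> degree r < e" for r
  proof (cases "good P r")
    case True
    define r' where "r' = tr P r"
    have r'0: "r' \<noteq> 0" unfolding r'_def using good_tr[OF P0 True] .
    have "r' \<in> S" unfolding S_def r'_def
      using inB_tr[OF P0 B0 r(1)] ev_tr_in[OF IP PQ IQ r(2)] r'0 lc_tr[OF P0 r'0[unfolded r'_def]]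
      unfolding r'_def by auto
    moreover have "degree r' < e" using r(3) True P0 degree_tr[OF P0, of r] unfolding r'_def good_def by auto
    ultimately show ?thesis using emin by fastforce
  next
    case False
    then show ?thesis unfolding good_def by (auto intro: ng_ev[OF IP])
  qed
  have epos: "0 < e"
  proof (rule ccontr)
    assume "\<not> 0 < e"
    then have "degree h = 0" using he by simp
    then have "h = [:c:]" unfolding c_def by (metis degree_0_id)
    then have "poly h z = c" by simp
    then have "c \<in> Q \<inter> B" using hQ cB by simp
    then have "c \<in> P \<inter> B" using PB by simp
    then show False using cP by simp
  qed
  have Div: "\<exists>k q r. smult (c ^ k) p = q * h + r \<and> inB B q \<and> (r = 0 \<or> degree r < e) \<and> poly r z \<in> P"
    if p: "inB B p" "poly p z \<in> Q" for p
  proof -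
    obtain k q r where kqr: "smult (c ^ k) p = q * h + r" "inB B q" "inB B r" "r = 0 \<or> degree r < degree h"
      using pseudo_div_exists[OF B hB h0 p(1)] unfolding c_def by blast
    have "poly r z = c ^ k * poly p z - poly q z * poly h z"
      using arg_cong[OF kqr(1), of "\<lambda>x. poly x z"] by simp
    also have "\<dots> \<in> Q" by (intro ideal_diff[OF IQ] ideal_mult_left[OF IQ] p hQ ideal_mult_right[OF IQ])
    finally have "poly r z \<in> P" using Rfact kqr he by auto
    then show ?thesis using kqr he by blast
  qed
  have hP: "poly h z \<in> P"
  proof (rule ccontr)
    assume hnP: "poly h z \<notin> P"
    have "\<forall>p. inB B p \<and> p \<noteq> 0 \<and> lead_coeff p \<notin> P \<and> poly p z \<in> P \<longrightarrow> degree p \<noteq> d" for d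
    proof (induction d rule: less_induct)
      case (less d)
      show ?case
      proof (intro allI impI notI)
        fix p assume pp: "inB B p \<and> p \<noteq> 0 \<and> lead_coeff p \<notin> P \<and> poly p z \<in> P" and dp: "degree p = d"
        have pS: "p \<in> S" using pp PQ unfolding S_def by blast
        have ed: "e \<le> d" using emin[OF pS] dp by simp
        obtain k q r where kqr: "smult (c ^ k) p = q * h + r" "inB B q" "r = 0 \<or> degree r < e" "poly r z \<in> P"
          using Div[of p] pS unfolding S_def by blast
        have qh: "q * h = smult (c ^ k) p - r" using kqr(1) by simp
        have "poly q z * poly h z = c ^ k * poly p z - poly r z"
          using arg_cong[OF qh, of "\<lambda>x. poly x z"] by simp
        also have "\<dots> \<in> P" using pp kqr(4) by (intro ideal_diff[OF IP] ideal_mult_left[OF IP]) auto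
        finally have qP: "poly q z \<in> P" using prime_mult[OF P] hnP by blast
        have rd: "coeff r d = 0" using kqr(3) ed by (auto simp: coeff_eq_0)
        have cqh: "coeff (q * h) d = c ^ k * lead_coeff p" unfolding qh using rd dp by simp
        have cqhP: "coeff (q * h) d \<notin> P" unfolding cqh using prime_mult_notin[OF P ckP] pp by blast
        then have q0: "q \<noteq> 0" using P0 by auto
        have "lead_coeff q * c \<noteq> 0" using nzd[of "lead_coeff q" c] q0 h0 unfolding c_def by auto
        then have "coeff (q * h) (degree q + e) \<noteq> 0"
          using coeff_mult_degree_sum[of q h] unfolding he c_def by simp
        then have "degree q + e \<le> degree (q * h)" by (rule le_degree)
        moreover have "degree (q * h) \<le> d" unfolding qh
          using kqr(3) ed dp degree_smult_le[of "c^k" p]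
          by (intro degree_diff_le) auto
        ultimately have dq: "degree q < d" using epos by linarith
        have gq: "good P q" using not_good_mult[OF IP, of q h] cqhP unfolding good_def by blast
        define q' where "q' = tr P q"
        have q'0: "q' \<noteq> 0" unfolding q'_def using good_tr[OF P0 gq] .
        have "inB B q' \<and> q' \<noteq> 0 \<and> lead_coeff q' \<notin> P \<and> poly q' z \<in> P"
          using inB_tr[OF P0 B0 kqr(2)] q'0 lc_tr[OF P0 q'0[unfolded q'_def]]
            ev_tr_in[OF IP order.refl IP qP] unfolding q'_def by auto
        moreover have "degree q' < d" using degree_tr[OF P0, of q] dq unfolding q'_def by simp
        ultimately show False using less.IH by blast
      qed
    qed
    then show False using g'S g'P unfolding S_def by blast
  qed
  obtain k q r where kqr: "smult (c ^ k) f = q * h + r" "poly r z \<in> P"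
    using Div[OF f] by blast
  have "c ^ k * poly f z = poly q z * poly h z + poly r z"
    using arg_cong[OF kqr(1), of "\<lambda>x. poly x z"] by simp
  also have "\<dots> \<in> P" by (intro ideal_add[OF IP] ideal_mult_left[OF IP] hP kqr(2))
  finally show ?thesis using prime_mult[OF P] ckP by blast
qed


section \<open>Polynomial ring facts\<close>

definition KY :: "'v set \<Rightarrow> ('v, 'k::comm_ring_1) mpoly set" where
  "KY Y = {f. \<forall>m \<in> Poly_Mapping.keys f. Poly_Mapping.keys m \<subseteq> Y}"

lemma keys_add_nat: "Poly_Mapping.keys ((a::'v \<Rightarrow>\<^sub>0 nat) + b) = Poly_Mapping.keys a \<union> Poly_Mapping.keys b"
  by (auto simp: in_keys_iff lookup_add)

lemma KY_add: "a \<in> KY Y \<Longrightarrow> b \<in> KY Y \<Longrightarrow> a + b \<in> KY Y"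
  unfolding KY_def using keys_add[of a b] by blast

lemma KY_uminus: "a \<in> KY Y \<Longrightarrow> - a \<in> KY Y"
  unfolding KY_def by (simp add: keys_minus)

lemma KY_diff: "a \<in> KY Y \<Longrightarrow> b \<in> KY Y \<Longrightarrow> a - b \<in> KY Y"
  using KY_add[of a Y "-b"] KY_uminus[of b Y] by simp

lemma KY_mult: "a \<in> KY Y \<Longrightarrow> b \<in> KY Y \<Longrightarrow> a * b \<in> KY Y"
proof -
  assume a: "a \<in> KY Y" and b: "b \<in> KY Y"
  show ?thesis unfolding KY_def
  proof (rule CollectI, rule ballI)
    fix m assume "m \<in> Poly_Mapping.keys (a * b)"
    then have "m \<in> {x + y | x y. x \<in> Poly_Mapping.keys a \<and> y \<in> Poly_Mapping.keys b}"
      using keys_mult[of a b] by blast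
    then obtain m1 m2 where m: "m = m1 + m2" "m1 \<in> Poly_Mapping.keys a" "m2 \<in> Poly_Mapping.keys b"
      by blast
    have "Poly_Mapping.keys m1 \<subseteq> Y" "Poly_Mapping.keys m2 \<subseteq> Y"
      using a b m(2,3) unfolding KY_def by auto
    moreover have "Poly_Mapping.keys m = Poly_Mapping.keys m1 \<union> Poly_Mapping.keys m2"
      unfolding m(1) by (rule keys_add_nat)
    ultimately show "Poly_Mapping.keys m \<subseteq> Y" by blast
  qed
qed

lemma KY_zero: "0 \<in> KY Y" unfolding KY_def by simp
lemma KY_one: "1 \<in> KY Y" unfolding KY_def by simp

lemma subring_KY: "subring (KY Y)"
  unfolding subring_def by (intro conjI ballI KY_zero KY_one KY_add KY_diff KY_mult)

lemma KY_mono: "Y \<subseteq> Y' \<Longrightarrow> KY Y \<subseteq> KY Y'"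
  unfolding KY_def by blast

lemma KY_UNIV: "KY UNIV = UNIV"
  unfolding KY_def by blast

lemma sum_single: "f = (\<Sum>m\<in>Poly_Mapping.keys f. Poly_Mapping.single m (Poly_Mapping.lookup f m))"
proof (rule poly_mapping_eqI)
  fix k
  have "Poly_Mapping.lookup (\<Sum>m\<in>Poly_Mapping.keys f. Poly_Mapping.single m (Poly_Mapping.lookup f m)) k
     = (\<Sum>m\<in>Poly_Mapping.keys f. (if m = k then Poly_Mapping.lookup f m else 0))"
    unfolding lookup_sum lookup_single when_def by (intro sum.cong) auto
  also have "\<dots> = Poly_Mapping.lookup f k"
    by (simp add: sum.delta' in_keys_iff)
  finally show "Poly_Mapping.lookup f k = Poly_Mapping.lookup (\<Sum>m\<in>Poly_Mapping.keys f. Poly_Mapping.single m (Poly_Mapping.lookup f m)) k" by simp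
qed

lemma var_power: "(var w :: ('v, 'k::comm_ring_1) mpoly) ^ k = Poly_Mapping.single (Poly_Mapping.single w k) 1"
proof (induction k)
  case 0 then show ?case by simp
next
  case (Suc k)
  have "(var w :: ('v, 'k) mpoly) ^ Suc k = Poly_Mapping.single (Poly_Mapping.single w 1 + Poly_Mapping.single w k) 1"
    by (simp only: power_Suc Suc.IH) (simp add: var_def mult_single)
  also have "Poly_Mapping.single w 1 + Poly_Mapping.single w k = Poly_Mapping.single w (Suc k)"
    by (simp flip: single_add)
  finally show ?case .
qed

lemma rep_single:
  assumes "Poly_Mapping.keys m \<subseteq> insert z Y"
  shows "\<exists>p. inB (KY Y) p \<and> poly p (var z) = (Poly_Mapping.single m c :: ('v, 'k::comm_ring_1) mpoly)"
proof -
  define k where "k = Poly_Mapping.lookup m z"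
  define m' where "m' = Poly_Mapping.update z 0 m"
  have mm: "m = m' + Poly_Mapping.single z k" unfolding m'_def k_def
    by (rule poly_mapping_eqI) (simp add: lookup_add lookup_update lookup_single when_def)
  have km': "Poly_Mapping.keys m' \<subseteq> Y" using assms unfolding m'_def by (auto simp: keys_update)
  have "Poly_Mapping.single m' c \<in> KY Y" unfolding KY_def using km' by simp
  then have "inB (KY Y) (monom (Poly_Mapping.single m' c) k)"
    by (rule inB_monom[OF subring_KY])
  moreover have "poly (monom (Poly_Mapping.single m' c) k) (var z) = (Poly_Mapping.single (m' + Poly_Mapping.single z k) c :: ('v, 'k) mpoly)"
    by (simp add: poly_monom var_power mult_single)
  ultimately show ?thesis unfolding mm[symmetric] by blast
qed

lemma rep:
  assumes "f \<in> KY (insert z Y)"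
  shows "\<exists>p. inB (KY Y) p \<and> poly p (var z) = (f :: ('v, 'k::comm_ring_1) mpoly)"
proof -
  have "\<exists>p. inB (KY Y) p \<and> poly p (var z) = (\<Sum>m\<in>A. Poly_Mapping.single m (Poly_Mapping.lookup f m))"
    if "A \<subseteq> Poly_Mapping.keys f" for A
    using that
  proof (induction A rule: infinite_finite_induct)
    case (infinite A)
    have "inB (KY Y) 0" by (rule inB_zero[OF subring_KY])
    then show ?case using infinite.hyps by (intro exI[of _ 0]) simp
  next
    case empty
    have "inB (KY Y) 0" by (rule inB_zero[OF subring_KY])
    then show ?case by (intro exI[of _ 0]) simp
  next
    case (insert x F)
    then obtain p where p: "inB (KY Y) p" "poly p (var z) = (\<Sum>m\<in>F. Poly_Mapping.single m (Poly_Mapping.lookup f m))"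
      by blast
    have "x \<in> Poly_Mapping.keys f" using insert.prems by blast
    then have "Poly_Mapping.keys x \<subseteq> insert z Y" using assms unfolding KY_def by blast
    then obtain p' where p': "inB (KY Y) p'" "poly p' (var z) = Poly_Mapping.single x (Poly_Mapping.lookup f x)"
      using rep_single[of x z Y "Poly_Mapping.lookup f x"] by blast
    have "inB (KY Y) (p' + p)" by (rule inB_add[OF subring_KY p'(1) p(1)])
    moreover have "poly (p' + p) (var z) = (\<Sum>m\<in>insert x F. Poly_Mapping.single m (Poly_Mapping.lookup f m))"
      using insert.hyps by (simp add: p(2) p'(2))
    ultimately show ?case by blast
  qed
  from this[OF order.refl] obtain p where "inB (KY Y) p"
    "poly p (var z) = (\<Sum>m\<in>Poly_Mapping.keys f. Poly_Mapping.single m (Poly_Mapping.lookup f m))"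
    by blast
  then show ?thesis by (metis sum_single)
qed

lemma var_in_KY: "w \<in> Y \<Longrightarrow> var w \<in> KY Y"
  unfolding KY_def var_def by auto

lemma var_nonzero: "(var w :: ('v, 'k::comm_ring_1) mpoly) \<noteq> 0"
  unfolding var_def by (metis lookup_single_eq lookup_zero zero_neq_one)


definition mumap :: "('v::countable \<Rightarrow>\<^sub>0 nat) \<Rightarrow> (nat \<Rightarrow>\<^sub>0 nat)" where
  "mumap m = Abs_poly_mapping (\<lambda>i. if i \<in> to_nat ` (UNIV :: 'v set) then Poly_Mapping.lookup m (from_nat i) else 0)"

lemma lookup_mumap: "Poly_Mapping.lookup (mumap (m :: 'v::countable \<Rightarrow>\<^sub>0 nat)) i = (if i \<in> to_nat ` (UNIV :: 'v set) then Poly_Mapping.lookup m (from_nat i) else 0)"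
proof -
  have "{i. (if i \<in> to_nat ` (UNIV :: 'v set) then Poly_Mapping.lookup m (from_nat i) else 0) \<noteq> 0} \<subseteq> to_nat ` Poly_Mapping.keys m"
    by (auto simp: in_keys_iff)
  then have "finite {i. (if i \<in> to_nat ` (UNIV :: 'v set) then Poly_Mapping.lookup m (from_nat i) else 0) \<noteq> 0}"
    by (rule finite_subset) simp
  then show ?thesis unfolding mumap_def by simp
qed

lemma mumap_to_nat: "Poly_Mapping.lookup (mumap m) (to_nat v) = Poly_Mapping.lookup m v"
  by (simp add: lookup_mumap)

lemma mumap_add: "mumap (a + b) = mumap a + mumap b"
  by (rule poly_mapping_eqI) (simp add: lookup_mumap lookup_add)

lemma mumap_inj: "mumap a = mumap b \<Longrightarrow> a = b"
  by (rule poly_mapping_eqI) (metis mumap_to_nat)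

lemma lookup_mult_sum:
  "Poly_Mapping.lookup (f * g) k = (\<Sum>a\<in>Poly_Mapping.keys f. \<Sum>b\<in>Poly_Mapping.keys g.
      if a + b = k then Poly_Mapping.lookup f a * Poly_Mapping.lookup g b else (0::'b::comm_semiring_1))"
proof -
  have "(\<Sum>a\<in>Poly_Mapping.keys f. Poly_Mapping.single a (Poly_Mapping.lookup f a)) *
        (\<Sum>b\<in>Poly_Mapping.keys g. Poly_Mapping.single b (Poly_Mapping.lookup g b)) = f * g"
    by (simp only: sum_single[symmetric])
  then have "f * g = (\<Sum>a\<in>Poly_Mapping.keys f. \<Sum>b\<in>Poly_Mapping.keys g.
        Poly_Mapping.single (a + b) (Poly_Mapping.lookup f a * Poly_Mapping.lookup g b))"
    by (simp add: sum_product mult_single)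
  then show ?thesis by (simp add: lookup_sum lookup_single when_def)
qed

lemma mpoly_nzd:
  fixes a b :: "('v::finite, 'k::idom) mpoly"
  assumes ab: "a * b = 0"
  shows "a = 0 \<or> b = 0"
proof (rule ccontr)
  assume "\<not> (a = 0 \<or> b = 0)"
  then have ka: "Poly_Mapping.keys a \<noteq> {}" and kb: "Poly_Mapping.keys b \<noteq> {}" by auto
  have "Max (mumap ` Poly_Mapping.keys a) \<in> mumap ` Poly_Mapping.keys a"
    by (rule Max_in) (use ka in auto)
  then obtain a0 where a0: "a0 \<in> Poly_Mapping.keys a" "mumap a0 = Max (mumap ` Poly_Mapping.keys a)"
    by (metis imageE)
  have "Max (mumap ` Poly_Mapping.keys b) \<in> mumap ` Poly_Mapping.keys b"
    by (rule Max_in) (use kb in auto)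
  then obtain b0 where b0: "b0 \<in> Poly_Mapping.keys b" "mumap b0 = Max (mumap ` Poly_Mapping.keys b)"
    by (metis imageE)
  have amax: "mumap x \<le> mumap a0" if "x \<in> Poly_Mapping.keys a" for x
    unfolding a0(2) using that by simp
  have bmax: "mumap y \<le> mumap b0" if "y \<in> Poly_Mapping.keys b" for y
    unfolding b0(2) using that by simp
  have uniq: "x = a0 \<and> y = b0" if xy: "x \<in> Poly_Mapping.keys a" "y \<in> Poly_Mapping.keys b" "x + y = a0 + b0" for x y
  proof -
    have s: "mumap a0 + mumap b0 = mumap x + mumap y" using xy(3) by (metis mumap_add)
    have "mumap x = mumap a0"
    proof (rule ccontr)
      assume "mumap x \<noteq> mumap a0"
      then have "mumap x < mumap a0" using amax[OF xy(1)] by simp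
      then have "mumap x + mumap y < mumap a0 + mumap b0" using bmax[OF xy(2)] by (rule add_less_le_mono)
      then show False using s by simp
    qed
    then have "x = a0" by (rule mumap_inj)
    then show ?thesis using xy(3) by simp
  qed
  have "Poly_Mapping.lookup (a * b) (a0 + b0) =
    (\<Sum>x\<in>Poly_Mapping.keys a. \<Sum>y\<in>Poly_Mapping.keys b.
      if x = a0 then (if y = b0 then Poly_Mapping.lookup a a0 * Poly_Mapping.lookup b b0 else 0) else 0)"
    unfolding lookup_mult_sum
    by (intro sum.cong refl) (use uniq in auto)
  also have "\<dots> = (\<Sum>x\<in>Poly_Mapping.keys a. if x = a0 then Poly_Mapping.lookup a a0 * Poly_Mapping.lookup b b0 else 0)"
  proof (rule sum.cong[OF refl])
    fix x show "(\<Sum>y\<in>Poly_Mapping.keys b. if x = a0 then (if y = b0 then Poly_Mapping.lookup a a0 * Poly_Mapping.lookup b b0 else 0) else 0)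
      = (if x = a0 then Poly_Mapping.lookup a a0 * Poly_Mapping.lookup b b0 else 0)"
      using b0(1) by (cases "x = a0") simp_all
  qed
  also have "\<dots> = Poly_Mapping.lookup a a0 * Poly_Mapping.lookup b b0"
    using a0(1) by simp
  also have "\<dots> \<noteq> 0" using a0(1) b0(1) by (simp add: in_keys_iff)
  finally show False using ab by simp
qed


lemma KY_empty_prime:
  fixes P :: "('v, 'k::field) mpoly set"
  assumes P: "is_prime_ideal P"
  shows "P \<inter> KY {} \<subseteq> {0}"
proof
  fix f assume f: "f \<in> P \<inter> KY {}"
  have keys0: "m = 0" if "m \<in> Poly_Mapping.keys f" for m
    using f that unfolding KY_def by auto
  define c where "c = Poly_Mapping.lookup f 0"
  have fc: "f = Poly_Mapping.single 0 c"
  proof (rule poly_mapping_eqI)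
    fix k show "Poly_Mapping.lookup f k = Poly_Mapping.lookup (Poly_Mapping.single 0 c) k"
      using keys0[of k] unfolding c_def by (cases "k = 0") (auto simp: lookup_single in_keys_iff)
  qed
  show "f \<in> {0}"
  proof (cases "c = 0")
    case True then show ?thesis using fc by simp
  next
    case False
    have "Poly_Mapping.single 0 (inverse c) * f = 1"
      unfolding fc mult_single using False by simp
    moreover have "Poly_Mapping.single 0 (inverse c) * f \<in> P"
      using f ideal_mult_left[OF prime_ideal[OF P]] by blast
    ultimately show ?thesis using prime_one[OF P] by simp
  qed
qed

lemma chainL:
  fixes P Q :: "('v::finite, 'k::field) mpoly set"
  assumes P: "is_prime_ideal P" and Q: "is_prime_ideal Q" and PQ: "P \<subseteq> Q"
    and PY: "P \<inter> KY Y \<subseteq> {0}"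
    and ext: "\<And>z. z \<notin> Y \<Longrightarrow> \<not> (P \<inter> KY (insert z Y) \<subseteq> {0})"
  shows "finite D \<Longrightarrow> D \<inter> Y = {} \<Longrightarrow> P \<inter> KY (Y \<union> D) \<noteq> Q \<inter> KY (Y \<union> D) \<Longrightarrow> \<not> (Q \<inter> KY Y \<subseteq> {0})"
proof (induction D rule: finite_induct)
  case empty
  have "0 \<in> P" "0 \<in> Q" using P Q by (auto simp: ideal_zero prime_ideal)
  then have "0 \<in> P \<inter> KY Y" "0 \<in> Q \<inter> KY Y" using KY_zero by auto
  then show ?case using empty PY by auto
next
  case (insert z F)
  have zY: "z \<notin> Y" and FY: "F \<inter> Y = {}" using insert.prems(1) by auto
  define W where "W = Y \<union> F"
  show ?case
  proof (cases "P \<inter> KY W = Q \<inter> KY W")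
    case False
    then show ?thesis using insert.IH FY unfolding W_def by blast
  next
    case True
    have eqW: "Y \<union> insert z F = insert z W" unfolding W_def by auto
    obtain g where g: "g \<in> P" "g \<in> KY (insert z Y)" "g \<noteq> 0" using ext[OF zY] by blast
    obtain pg where pg: "inB (KY Y) pg" "poly pg (var z) = g" using rep[OF g(2)] by blast
    have pgW: "inB (KY W) pg" using pg(1) KY_mono[of Y W] unfolding inB_def W_def by blast
    have "pg \<noteq> 0" using pg(2) g(3) by auto
    then have lc: "lead_coeff pg \<noteq> 0" by simp
    have "lead_coeff pg \<in> KY Y" using pg(1) unfolding inB_def by blast
    then have "lead_coeff pg \<notin> P" using lc PY by blast
    then have gpg: "good P pg" unfolding good_def by blast
    have "Q \<inter> KY (insert z W) \<subseteq> P \<inter> KY (insert z W)"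
    proof
      fix f assume f: "f \<in> Q \<inter> KY (insert z W)"
      obtain pf where pf: "inB (KY W) pf" "poly pf (var z) = f" using rep[of f z W] f by blast
      have "poly pf (var z) \<in> P"
        by (rule fiber[OF mpoly_nzd P Q PQ subring_KY True pgW _ gpg pf(1)])
           (use pg(2) g(1) pf(2) f in auto)
      then show "f \<in> P \<inter> KY (insert z W)" using pf(2) f by blast
    qed
    then have "P \<inter> KY (Y \<union> insert z F) = Q \<inter> KY (Y \<union> insert z F)" unfolding eqW using PQ by blast
    then show ?thesis using insert.prems(2) by blast
  qed
qed

definition tdeg :: "('v::finite, 'k::field) mpoly set \<Rightarrow> nat" where
  "tdeg P = Max {card Y | Y. P \<inter> KY Y \<subseteq> {0}}"

lemma tdeg_finite: "finite {card Y | Y. (P :: ('v::finite, 'k::field) mpoly set) \<inter> KY Y \<subseteq> {0}}"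
proof -
  have "{card Y | Y. P \<inter> KY Y \<subseteq> {0}} \<subseteq> card ` (UNIV :: 'v set set)" by blast
  then show ?thesis by (rule finite_subset) simp
qed

lemma tdeg_ge: "(P :: ('v::finite, 'k::field) mpoly set) \<inter> KY Y \<subseteq> {0} \<Longrightarrow> card Y \<le> tdeg P"
  unfolding tdeg_def by (rule Max_ge[OF tdeg_finite]) blast

lemma tdeg_ex:
  assumes "is_prime_ideal (P :: ('v::finite, 'k::field) mpoly set)"
  shows "\<exists>Y. P \<inter> KY Y \<subseteq> {0} \<and> card Y = tdeg P"
proof -
  have e: "P \<inter> KY ({} :: 'v set) \<subseteq> {0}" by (rule KY_empty_prime[OF assms])
  have "card ({} :: 'v set) \<in> {card Y | Y. P \<inter> KY Y \<subseteq> {0}}"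
    using e by (intro CollectI exI[of _ "{} :: 'v set"] conjI refl)
  then have ne: "{card Y | Y. P \<inter> KY Y \<subseteq> {0}} \<noteq> {}" by (metis empty_iff)
  have "tdeg P \<in> {card Y | Y. P \<inter> KY Y \<subseteq> {0}}"
    unfolding tdeg_def by (rule Max_in[OF tdeg_finite ne])
  then obtain Y where "tdeg P = card Y" "P \<inter> KY Y \<subseteq> {0}" by (rule CollectE) (elim exE conjE)
  then show ?thesis by (intro exI[of _ Y]) simp
qed

lemma tdeg_strict:
  fixes P Q :: "('v::finite, 'k::field) mpoly set"
  assumes P: "is_prime_ideal P" and Q: "is_prime_ideal Q" and PQ: "P \<subset> Q"
  shows "tdeg Q < tdeg P"
proof (rule ccontr)
  assume "\<not> tdeg Q < tdeg P"
  then have le: "tdeg P \<le> tdeg Q" by simp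
  obtain Y where Y: "Q \<inter> KY Y \<subseteq> {0}" "card Y = tdeg Q" using tdeg_ex[OF Q] by blast
  have PY: "P \<inter> KY Y \<subseteq> {0}" using Y(1) PQ by blast
  have extY: "\<not> (P \<inter> KY (insert z Y) \<subseteq> {0})" if z: "z \<notin> Y" for z
  proof
    assume "P \<inter> KY (insert z Y) \<subseteq> {0}"
    then have "card (insert z Y) \<le> tdeg P" by (rule tdeg_ge)
    moreover have "card (insert z Y) = Suc (card Y)" using z by simp
    ultimately show False using le Y(2) by simp
  qed
  have PQ': "P \<subseteq> Q" using PQ by blast
  have neq: "P \<inter> KY (Y \<union> (UNIV - Y)) \<noteq> Q \<inter> KY (Y \<union> (UNIV - Y))"
    using PQ by (simp add: KY_UNIV)
  have "\<not> (Q \<inter> KY Y \<subseteq> {0})"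
    by (rule chainL[OF P Q PQ' PY extY _ _ neq]) auto
  then show False using Y(1) by simp
qed

lemma tdeg_chain:
  fixes P :: "nat \<Rightarrow> ('v::finite, 'k::field) mpoly set"
  assumes "\<forall>i\<le>k. is_prime_ideal (P i)" "\<forall>i<k. P i \<subset> P (Suc i)"
  shows "i \<le> k \<Longrightarrow> tdeg (P i) + i \<le> tdeg (P 0)"
proof (induction i)
  case 0 then show ?case by simp
next
  case (Suc i)
  have "tdeg (P (Suc i)) < tdeg (P i)"
    using tdeg_strict[of "P i" "P (Suc i)"] assms Suc.prems by simp
  then show ?case using Suc by simp
qed

lemma tdeg_vars:
  fixes P :: "('v::finite, 'k::field) mpoly set"
  assumes "is_prime_ideal P"
  shows "tdeg P + card {w. var w \<in> P} \<le> card (UNIV :: 'v set)"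
proof -
  obtain Y where Y: "P \<inter> KY Y \<subseteq> {0}" "card Y = tdeg P" using tdeg_ex[OF assms] by blast
  have "Y \<inter> {w. var w \<in> P} = {}"
  proof (rule ccontr)
    assume "Y \<inter> {w. var w \<in> P} \<noteq> {}"
    then obtain w where w: "w \<in> Y" "var w \<in> P" by blast
    have "var w \<in> KY Y" by (rule var_in_KY[OF w(1)])
    then have "var w \<in> P \<inter> KY Y" using w(2) by simp
    then have "var w \<in> ({0} :: ('v, 'k) mpoly set)" using Y(1) by (rule subsetD[rotated])
    then show False by (simp add: var_nonzero)
  qed
  then have "card Y + card {w. var w \<in> P} = card (Y \<union> {w. var w \<in> P})"
    by (simp add: card_Un_disjoint)
  also have "\<dots> \<le> card (UNIV :: 'v set)" by (rule card_mono) auto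
  finally show ?thesis using Y(2) by simp
qed


definition PV :: "'v set \<Rightarrow> ('v, 'k::comm_ring_1) mpoly set" where
  "PV X = {f. \<forall>m\<in>Poly_Mapping.keys f. \<exists>v\<in>X. 0 < Poly_Mapping.lookup m v}"

lemma PV_ideal: "is_ideal (PV X :: ('v, 'k::comm_ring_1) mpoly set)"
  unfolding is_ideal_def
proof (intro conjI ballI allI)
  show "(0 :: ('v, 'k) mpoly) \<in> PV X" unfolding PV_def by simp
next
  fix a b :: "('v, 'k) mpoly" assume a: "a \<in> PV X" and b: "b \<in> PV X"
  show "a + b \<in> PV X" unfolding PV_def
  proof (rule CollectI, rule ballI)
    fix m assume "m \<in> Poly_Mapping.keys (a + b)"
    then have "m \<in> Poly_Mapping.keys a \<or> m \<in> Poly_Mapping.keys b" using keys_add[of a b] by blast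
    then show "\<exists>v\<in>X. 0 < Poly_Mapping.lookup m v" using a b unfolding PV_def by blast
  qed
next
  fix r a :: "('v, 'k) mpoly" assume a: "a \<in> PV X"
  show "r * a \<in> PV X" unfolding PV_def
  proof (rule CollectI, rule ballI)
    fix m assume "m \<in> Poly_Mapping.keys (r * a)"
    then have "m \<in> {x + y | x y. x \<in> Poly_Mapping.keys r \<and> y \<in> Poly_Mapping.keys a}"
      using keys_mult[of r a] by blast
    then obtain x y where m: "m = x + y" "y \<in> Poly_Mapping.keys a" by blast
    then obtain v where "v \<in> X" "0 < Poly_Mapping.lookup y v" using a unfolding PV_def by blast
    then show "\<exists>v\<in>X. 0 < Poly_Mapping.lookup m v" unfolding m(1) by (intro bexI[of _ v]) (auto simp: lookup_add)
  qed
qed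

lemma PV_one: "(1 :: ('v, 'k::comm_ring_1) mpoly) \<notin> PV X"
  unfolding PV_def by simp

lemma PV_mono: "X \<subseteq> X' \<Longrightarrow> PV X \<subseteq> PV X'"
  unfolding PV_def by blast

lemma var_PV: "(var w :: ('v, 'k::comm_ring_1) mpoly) \<in> PV X \<longleftrightarrow> w \<in> X"
  unfolding PV_def var_def by (auto simp: lookup_single when_def)

lemma keys_sum_sub: "Poly_Mapping.keys (sum f A) \<subseteq> (\<Union>x\<in>A. Poly_Mapping.keys (f x))"
proof (induction A rule: infinite_finite_induct)
  case (insert x F)
  then show ?case using keys_add[of "f x" "sum f F"] by auto
qed auto

lemma PV_KY: "PV X \<inter> KY (- X) \<subseteq> {0}"
proof
  fix f assume f: "f \<in> PV X \<inter> KY (- X)"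
  have "Poly_Mapping.keys f = {}"
  proof (rule ccontr)
    assume "Poly_Mapping.keys f \<noteq> {}"
    then obtain m where m: "m \<in> Poly_Mapping.keys f" by blast
    then obtain v where v: "v \<in> X" "0 < Poly_Mapping.lookup m v" using f unfolding PV_def by blast
    have "Poly_Mapping.keys m \<subseteq> - X" using f m unfolding KY_def by blast
    moreover have "v \<in> Poly_Mapping.keys m" using v(2) by (simp add: in_keys_iff)
    ultimately show False using v(1) by blast
  qed
  then show "f \<in> {0}" by simp
qed

lemma PV_split:
  fixes a :: "('v, 'k::comm_ring_1) mpoly"
  shows "\<exists>a1 a2. a = a1 + a2 \<and> a1 \<in> KY (- X) \<and> a2 \<in> PV X"
proof -
  define S1 where "S1 = {m\<in>Poly_Mapping.keys a. \<forall>v\<in>X. Poly_Mapping.lookup m v = 0}"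
  define S2 where "S2 = {m\<in>Poly_Mapping.keys a. \<not> (\<forall>v\<in>X. Poly_Mapping.lookup m v = 0)}"
  define a1 where "a1 = (\<Sum>m\<in>S1. Poly_Mapping.single m (Poly_Mapping.lookup a m))"
  define a2 where "a2 = (\<Sum>m\<in>S2. Poly_Mapping.single m (Poly_Mapping.lookup a m))"
  have U: "Poly_Mapping.keys a = S1 \<union> S2" and Dj: "S1 \<inter> S2 = {}" unfolding S1_def S2_def by auto
  have "(\<Sum>m\<in>Poly_Mapping.keys a. Poly_Mapping.single m (Poly_Mapping.lookup a m)) = a1 + a2"
    unfolding a1_def a2_def U by (rule sum.union_disjoint) (auto simp: S1_def S2_def)
  then have aa: "a = a1 + a2" by (metis sum_single)
  have "a1 \<in> KY (- X)" unfolding KY_def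
  proof (rule CollectI, rule ballI)
    fix m assume "m \<in> Poly_Mapping.keys a1"
    then have "m \<in> (\<Union>x\<in>S1. Poly_Mapping.keys (Poly_Mapping.single x (Poly_Mapping.lookup a x)))"
      using keys_sum_sub[of "\<lambda>x. Poly_Mapping.single x (Poly_Mapping.lookup a x)" S1] unfolding a1_def by blast
    then have "m \<in> S1" by (auto split: if_splits)
    then show "Poly_Mapping.keys m \<subseteq> - X" unfolding S1_def by (auto simp: in_keys_iff)
  qed
  moreover have "a2 \<in> PV X" unfolding PV_def
  proof (rule CollectI, rule ballI)
    fix m assume "m \<in> Poly_Mapping.keys a2"
    then have "m \<in> (\<Union>x\<in>S2. Poly_Mapping.keys (Poly_Mapping.single x (Poly_Mapping.lookup a x)))"
      using keys_sum_sub[of "\<lambda>x. Poly_Mapping.single x (Poly_Mapping.lookup a x)" S2] unfolding a2_def by blast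
    then have "m \<in> S2" by (auto split: if_splits)
    then show "\<exists>v\<in>X. 0 < Poly_Mapping.lookup m v" unfolding S2_def by auto
  qed
  ultimately show ?thesis using aa by blast
qed

lemma PV_prime: "is_prime_ideal (PV X :: ('v::finite, 'k::field) mpoly set)"
  unfolding is_prime_ideal_def
proof (intro conjI allI impI)
  show "is_ideal (PV X :: ('v, 'k) mpoly set)" by (rule PV_ideal)
  show "(PV X :: ('v, 'k) mpoly set) \<noteq> UNIV" using PV_one by blast
next
  fix a b :: "('v, 'k) mpoly"
  assume ab: "a * b \<in> PV X"
  show "a \<in> PV X \<or> b \<in> PV X"
  proof (rule ccontr)
    assume nab: "\<not> (a \<in> PV X \<or> b \<in> PV X)"
    obtain a1 a2 where a: "a = a1 + a2" "a1 \<in> KY (- X)" "a2 \<in> PV X" using PV_split by blast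
    obtain b1 b2 where b: "b = b1 + b2" "b1 \<in> KY (- X)" "b2 \<in> PV X" using PV_split by blast
    have I: "is_ideal (PV X :: ('v, 'k) mpoly set)" by (rule PV_ideal)
    have a10: "a1 \<noteq> 0" using nab a by auto
    have b10: "b1 \<noteq> 0" using nab b by auto
    have "a1 * b1 = a * b - (a1 * b2 + a2 * b)" unfolding a(1) b(1) by (simp add: algebra_simps)
    also have "\<dots> \<in> PV X"
      by (intro ideal_diff[OF I] ab ideal_add[OF I] ideal_mult_left[OF I] ideal_mult_right[OF I] a(3) b(3))
    finally have "a1 * b1 \<in> PV X" .
    moreover have "a1 * b1 \<in> KY (- X)" by (rule KY_mult[OF a(2) b(2)])
    ultimately have "a1 * b1 \<in> PV X \<inter> KY (- X)" by simp
    then have "a1 * b1 = 0" using PV_KY by blast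
    then show False using mpoly_nzd a10 b10 by blast
  qed
qed

section \<open>Graph part\<close>

lemma ex_maxind: "\<exists>M. maximal_independent E (M :: 'v::finite set)"
proof -
  define S where "S = {A :: 'v set. independent E A}"
  have fin: "finite (card ` S)" by simp
  have "{} \<in> S" unfolding S_def independent_def by simp
  then have ne: "card ` S \<noteq> {}" by blast
  have "Max (card ` S) \<in> card ` S" by (rule Max_in[OF fin ne])
  then obtain M where M: "M \<in> S" "card M = Max (card ` S)" by (metis imageE)
  have "maximal_independent E M" unfolding maximal_independent_def
  proof (intro conjI allI impI)
    show "independent E M" using M(1) unfolding S_def by simp
    fix B assume B: "independent E B \<and> M \<subseteq> B"
    then have "card B \<le> card M" unfolding M(2) using fin S_def by (intro Max_ge) auto
    then show "B = M" using B card_subset_eq[of B M] card_mono[of B M] by (metis card_seteq finite)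
  qed
  then show ?thesis by blast
qed

lemma maxind_dom:
  assumes G: "simple_graph E" and M: "maximal_independent E M"
  shows "dominating E M"
  unfolding dominating_def
proof
  fix v
  show "M \<inter> closed_nbhd E v \<noteq> {}"
  proof
    assume empty: "M \<inter> closed_nbhd E v = {}"
    then have vM: "v \<notin> M" unfolding closed_nbhd_def by auto
    have nadj: "\<And>u. u \<in> M \<Longrightarrow> \<not> E v u" using empty unfolding closed_nbhd_def by auto
    have "independent E (insert v M)" unfolding independent_def
    proof (intro ballI)
      fix x y assume x: "x \<in> insert v M" and y: "y \<in> insert v M"
      have indM: "independent E M" using M unfolding maximal_independent_def by simp
      show "\<not> E x y"
      proof (cases "x = v")
        case True
        then show ?thesis using y nadj G unfolding simple_graph_def by auto
      next
        case False
        then have xM: "x \<in> M" using x by simp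
        show ?thesis
        proof (cases "y = v")
          case True
          then show ?thesis using nadj[OF xM] G unfolding simple_graph_def by blast
        next
          case False
          then show ?thesis using indM xM y unfolding independent_def by auto
        qed
      qed
    qed
    then have "insert v M = M" using M unfolding maximal_independent_def by blast
    then show False using vM by blast
  qed
qed

lemma maxind_mindom:
  assumes G: "simple_graph E" and M: "maximal_independent E M"
  shows "minimal_dominating E M"
  unfolding minimal_dominating_def
proof (intro conjI allI impI)
  show "dominating E M" by (rule maxind_dom[OF G M])
  fix D' assume D': "D' \<subset> M"
  then obtain v where v: "v \<in> M" "v \<notin> D'" by blast
  have indM: "independent E M" using M unfolding maximal_independent_def by simp
  have "D' \<inter> closed_nbhd E v = {}"
  proof (rule ccontr)
    assume "D' \<inter> closed_nbhd E v \<noteq> {}"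
    then obtain u where u: "u \<in> D'" "u = v \<or> E v u" unfolding closed_nbhd_def by blast
    have "u \<in> M" using u(1) D' by blast
    then show False using u v indM unfolding independent_def by blast
  qed
  then show "\<not> dominating E D'" unfolding dominating_def by blast
qed

lemma dom_card:
  fixes E :: "'v::finite \<Rightarrow> 'v \<Rightarrow> bool"
  assumes G: "simple_graph E" and vwc: "very_well_covered E" and wd: "well_dominated E"
    and card: "card (UNIV :: 'v set) = 2 * n" and D: "dominating E D"
  shows "n \<le> card D"
proof -
  obtain M where M: "maximal_independent E M" using ex_maxind by blast
  have cM: "card M = n" using vwc M card unfolding very_well_covered_def by auto
  define S where "S = {D'. D' \<subseteq> D \<and> dominating E D'}"
  have fin: "finite (card ` S)" by simp
  have "D \<in> S" unfolding S_def using D by simp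
  then have ne: "card ` S \<noteq> {}" by blast
  have "Min (card ` S) \<in> card ` S" by (rule Min_in[OF fin ne])
  then obtain D1 where D1: "D1 \<in> S" "card D1 = Min (card ` S)" by (metis imageE)
  have "minimal_dominating E D1" unfolding minimal_dominating_def
  proof (intro conjI allI impI)
    show "dominating E D1" using D1(1) unfolding S_def by simp
    fix D' assume D': "D' \<subset> D1"
    show "\<not> dominating E D'"
    proof
      assume "dominating E D'"
      then have "D' \<in> S" using D' D1(1) unfolding S_def by auto
      then have "card D1 \<le> card D'" unfolding D1(2) using fin by (intro Min_le) auto
      moreover have "card D' < card D1" using D' by (intro psubset_card_mono) auto
      ultimately show False by simp
    qed
  qed
  then have "card D1 = card M" using wd maxind_mindom[OF G M] unfolding well_dominated_def by blast
  moreover have "card D1 \<le> card D" using D1(1) unfolding S_def by (intro card_mono) auto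
  ultimately show ?thesis using cM by simp
qed

lemma NI_sub:
  assumes "is_ideal J" and "\<And>v. (\<Prod>w\<in>closed_nbhd E v. var w) \<in> J"
  shows "NI E \<subseteq> J"
  unfolding NI_def ideal_gen_def using assms by blast

lemma gen_in_NI: "(\<Prod>w\<in>closed_nbhd E v. var w) \<in> NI E"
  unfolding NI_def ideal_gen_def by blast

lemma prime_dom:
  fixes P :: "('v::finite, 'k::field) mpoly set"
  assumes P: "is_prime_ideal P" and NI: "NI E \<subseteq> P"
  shows "dominating E {w. var w \<in> P}"
  unfolding dominating_def
proof
  fix v
  have "(\<Prod>w\<in>closed_nbhd E v. var w) \<in> P" using gen_in_NI[of E v] NI by (rule subsetD[rotated])
  then have "\<exists>w\<in>closed_nbhd E v. var w \<in> P" by (rule prime_prod[OF P, rotated]) simp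
  then obtain w where "w \<in> closed_nbhd E v" "var w \<in> P" by blast
  then show "{w. var w \<in> P} \<inter> closed_nbhd E v \<noteq> {}" by blast
qed

lemma NI_PV:
  assumes "dominating E M" "M \<subseteq> X"
  shows "(NI E :: ('v::finite, 'k::field) mpoly set) \<subseteq> PV X"
proof (rule NI_sub[OF PV_ideal])
  fix v
  obtain w where w: "w \<in> M" "w \<in> closed_nbhd E v" using assms(1) unfolding dominating_def by blast
  have "(\<Prod>w\<in>closed_nbhd E v. var w) = (var w :: ('v, 'k) mpoly) * (\<Prod>u\<in>closed_nbhd E v - {w}. var u)"
    using w(2) by (simp add: prod.remove)
  also have "\<dots> \<in> PV X" using w(1) assms(2) var_PV[of w X]
    by (intro ideal_mult_right[OF PV_ideal]) auto
  finally show "(\<Prod>w\<in>closed_nbhd E v. var w) \<in> (PV X :: ('v, 'k) mpoly set)" .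
qed

theorem lemma4p3:
  fixes E :: "'v::finite \<Rightarrow> 'v \<Rightarrow> bool" and n :: nat
  assumes "simple_graph E"
    and "very_well_covered E"
    and "card (UNIV :: 'v set) = 2 * n"
    and "infinite (UNIV :: 'k::field set)"
  shows "krull_dim_quot (NI E :: ('v, 'k) mpoly set) \<ge> enat n
         \<and> (well_dominated E \<longrightarrow> krull_dim_quot (NI E :: ('v, 'k) mpoly set) = enat n)"
proof -
  note G = assms(1) and vwc = assms(2) and card = assms(3)
  obtain M where M: "maximal_independent E M" using ex_maxind by blast
  have cM: "card M = n" using vwc M card unfolding very_well_covered_def by auto
  have domM: "dominating E M" by (rule maxind_dom[OF G M])
  define C where "C = UNIV - M"
  have cC: "card C = n" unfolding C_def using cM card by (simp add: card_Diff_subset)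
  obtain f where f: "bij_betw f {0..<n} C" using ex_bij_betw_nat_finite[of C] cC by auto
  define Pc :: "nat \<Rightarrow> ('v, 'k) mpoly set" where "Pc i = PV (M \<union> f ` {0..<i})" for i
  have lower: "enat n \<le> krull_dim_quot (NI E :: ('v, 'k) mpoly set)"
  proof -
    have "(\<forall>i\<le>n. is_prime_ideal (Pc i) \<and> NI E \<subseteq> Pc i) \<and> (\<forall>i<n. Pc i \<subset> Pc (Suc i))"
    proof (intro conjI allI impI)
      fix i assume "i \<le> n"
      show "is_prime_ideal (Pc i)" unfolding Pc_def by (rule PV_prime)
      show "NI E \<subseteq> Pc i" unfolding Pc_def by (rule NI_PV[OF domM]) blast
    next
      fix i assume i: "i < n"
      have sub: "M \<union> f ` {0..<i} \<subseteq> M \<union> f ` {0..<Suc i}" by auto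
      have fi: "f i \<in> C" using f i unfolding bij_betw_def by auto
      have "f i \<notin> f ` {0..<i}"
      proof
        assume "f i \<in> f ` {0..<i}"
        then obtain j where j: "j < i" "f j = f i" by auto
        then have "j = i" using f i unfolding bij_betw_def inj_on_def by auto
        then show False using j by simp
      qed
      then have notin: "f i \<notin> M \<union> f ` {0..<i}" using fi unfolding C_def by blast
      have "(var (f i) :: ('v, 'k) mpoly) \<in> Pc (Suc i)" unfolding Pc_def var_PV by auto
      moreover have "(var (f i) :: ('v, 'k) mpoly) \<notin> Pc i" unfolding Pc_def var_PV using notin .
      ultimately show "Pc i \<subset> Pc (Suc i)" using PV_mono[OF sub] unfolding Pc_def by blast
    qed
    then have "enat n \<in> {enat n | n. \<exists>P :: nat \<Rightarrow> ('v, 'k) mpoly set.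
      (\<forall>i\<le>n. is_prime_ideal (P i) \<and> NI E \<subseteq> P i) \<and> (\<forall>i<n. P i \<subset> P (Suc i))}" by blast
    then show ?thesis unfolding krull_dim_quot_def by (rule Sup_upper)
  qed
  have upper: "krull_dim_quot (NI E :: ('v, 'k) mpoly set) \<le> enat n" if wd: "well_dominated E"
    unfolding krull_dim_quot_def
  proof (rule Sup_least)
    fix x assume "x \<in> {enat k | k. \<exists>P :: nat \<Rightarrow> ('v, 'k) mpoly set.
      (\<forall>i\<le>k. is_prime_ideal (P i) \<and> NI E \<subseteq> P i) \<and> (\<forall>i<k. P i \<subset> P (Suc i))}"
    then obtain k and P :: "nat \<Rightarrow> ('v, 'k) mpoly set" where x: "x = enat k"
      and Pp: "\<forall>i\<le>k. is_prime_ideal (P i) \<and> NI E \<subseteq> P i" and Ps: "\<forall>i<k. P i \<subset> P (Suc i)" by blast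
    have pr: "\<forall>i\<le>k. is_prime_ideal (P i)" using Pp by blast
    have "tdeg (P k) + k \<le> tdeg (P 0)" by (rule tdeg_chain[OF pr Ps]) simp
    moreover have P0: "is_prime_ideal (P 0)" "NI E \<subseteq> P 0" using Pp by auto
    have "tdeg (P 0) + card {w. var w \<in> P 0} \<le> card (UNIV :: 'v set)" by (rule tdeg_vars[OF P0(1)])
    moreover have "n \<le> card {w. var w \<in> P 0}"
      by (rule dom_card[OF G vwc wd card prime_dom[OF P0]])
    ultimately have "k \<le> n" using card by linarith
    then show "x \<le> enat n" unfolding x by simp
  qed
  show ?thesis using lower upper by (auto intro: antisym)
qed

end
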